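(* Let $M,N$ be sharp, integral monoids, $\Gamma$ an $M$-metrised graph, $f:M\to N$ a monoid homomorphism with edge contraction $\Gamma'$ of $\Gamma$ along $f$, and $D\in\operatorname{Div}(\Gamma)$. Then $r(f_*(D))\ge r(D)$ (rank in $\Gamma'$ versus rank in $\Gamma$).
   Context: Monoids are commutative, sharp (only unit $0$), integral (cancellative), with groupification; $\langle m\rangle=\{km:k\in\mathbb Z\}$ and for $x=km$, $m\ne0$, $x/m:=k$. A graph is $(X,r,i)$, $X$ finite, $r$ idempotent, $i$ an involution, $i(x)=x\iff r(x)=x$; vertices $V$ = fixed points, half-edges $H=X\setminus V$, edges $\{e,i(e)\}$ joining $r(e),r(i(e))$, $H_v=\{e\in H:r(e)=v\}$; graphs are connected. An $M$-metrised graph adds $l:X\to M$ with $l(i(x))=l(x)$, $l(x)=0\iff x\in V$. Divisors: free abelian group on $V$, pointwise order; $\operatorname{Div}^k_+$ = effective divisors of degree $k$. $\operatorname{PL}(\Gamma)=\{g:V\to M^{gp}: g(r(e))-g(r(i(e)))\in\langle l(e)\rangle\ \forall e\in H\}$; $\Delta(g)=\sum_{v}\big(\sum_{e\in H_v}\frac{g(v)-g(r(i(e)))}{l(e)}\big)[v]$; $D\sim D'$ iff $D-D'\in\Delta(\operatorname{PL}(\Gamma))$; $|D|=\{E\ge0:E\sim D\}$; $r(D)=\max\{k\in\mathbb Z:|D-F|\ne\emptyset\ \forall F\in\operatorname{Div}^k_+(\Gamma)\}$. The edge contraction of $\Gamma$ along $f$ is the $N$-metrised graph $\Gamma'$ obtained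 as the quotient of $X$ by the equivalence relation generated by $e\sim r(e)\sim i(e)\sim r(i(e))$ for every $e\in H$ with $f(l(e))=0$, with induced $r,i$ and length $f\circ l$; $\varphi$ is the quotient map and $f_*(D)=\sum_{v}D(v)[\varphi(v)]$. *)

theory Defs
  imports Main
begin

text \<open>An integral (cancellative) commutative monoid is represented as a submonoid M of an
abelian group; its groupification is the subgroup {a - b | a, b in M}.\<close>

definition zsmul :: "int \<Rightarrow> 'a::ab_group_add \<Rightarrow> 'a" where
  "zsmul k m = (if 0 \<le> k then (((+) m) ^^ nat k) 0 else - ((((+) m) ^^ nat (- k)) 0))"

definition zspan :: "'a::ab_group_add \<Rightarrow> 'a set" where
  "zspan m = range (\<lambda>k. zsmul k m)"

definition zdiv :: "'a::ab_group_add \<Rightarrow> 'a \<Rightarrow> int" where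
  "zdiv x m = (THE k. x = zsmul k m)"

definition sharp_monoid :: "'a::ab_group_add set \<Rightarrow> bool" where
  "sharp_monoid M \<longleftrightarrow> 0 \<in> M \<and> (\<forall>a\<in>M. \<forall>b\<in>M. a + b \<in> M)
     \<and> (\<forall>a\<in>M. \<forall>b\<in>M. a + b = 0 \<longrightarrow> a = 0)"

definition gp :: "'a::ab_group_add set \<Rightarrow> 'a set" where
  "gp M = {a - b | a b. a \<in> M \<and> b \<in> M}"

definition monoid_hom :: "'a::ab_group_add set \<Rightarrow> 'b::ab_group_add set \<Rightarrow> ('a \<Rightarrow> 'b) \<Rightarrow> bool" where
  "monoid_hom M N f \<longleftrightarrow> (\<forall>a\<in>M. f a \<in> N) \<and> f 0 = 0 \<and> (\<forall>a\<in>M. \<forall>b\<in>M. f (a + b) = f a + f b)"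

definition verts :: "'x set \<Rightarrow> ('x \<Rightarrow> 'x) \<Rightarrow> 'x set" where
  "verts X r = {x \<in> X. r x = x}"

definition halfedges :: "'x set \<Rightarrow> ('x \<Rightarrow> 'x) \<Rightarrow> 'x set" where
  "halfedges X r = X - verts X r"

definition adj :: "'x set \<Rightarrow> ('x \<Rightarrow> 'x) \<Rightarrow> ('x \<Rightarrow> 'x) \<Rightarrow> ('x \<times> 'x) set" where
  "adj X r i = {(r e, r (i e)) | e. e \<in> halfedges X r}"

definition is_graph :: "'x set \<Rightarrow> ('x \<Rightarrow> 'x) \<Rightarrow> ('x \<Rightarrow> 'x) \<Rightarrow> bool" where
  "is_graph X r i \<longleftrightarrow> finite X \<and>
     (\<forall>x\<in>X. r x \<in> X \<and> i x \<in> X \<and> r (r x) = r x \<and> i (i x) = x \<and> (i x = x \<longleftrightarrow> r x = x)) \<and>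
     verts X r \<noteq> {} \<and> (\<forall>u\<in>verts X r. \<forall>v\<in>verts X r. (u, v) \<in> (adj X r i)\<^sup>*)"

definition metrised_graph :: "'m::ab_group_add set \<Rightarrow> 'x set \<Rightarrow> ('x \<Rightarrow> 'x) \<Rightarrow> ('x \<Rightarrow> 'x) \<Rightarrow> ('x \<Rightarrow> 'm) \<Rightarrow> bool" where
  "metrised_graph M X r i l \<longleftrightarrow> is_graph X r i \<and>
     (\<forall>x\<in>X. l x \<in> M \<and> l (i x) = l x \<and> (l x = 0 \<longleftrightarrow> x \<in> verts X r))"

definition divisors :: "'x set \<Rightarrow> ('x \<Rightarrow> 'x) \<Rightarrow> ('x \<Rightarrow> int) set" where
  "divisors X r = {D. \<forall>x. x \<notin> verts X r \<longrightarrow> D x = 0}"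

definition deg :: "'x set \<Rightarrow> ('x \<Rightarrow> 'x) \<Rightarrow> ('x \<Rightarrow> int) \<Rightarrow> int" where
  "deg X r D = sum D (verts X r)"

definition PL :: "'m::ab_group_add set \<Rightarrow> 'x set \<Rightarrow> ('x \<Rightarrow> 'x) \<Rightarrow> ('x \<Rightarrow> 'x) \<Rightarrow> ('x \<Rightarrow> 'm)
    \<Rightarrow> ('x \<Rightarrow> 'm) set" where
  "PL M X r i l = {g. (\<forall>v\<in>verts X r. g v \<in> gp M) \<and>
     (\<forall>e\<in>halfedges X r. g (r e) - g (r (i e)) \<in> zspan (l e))}"

definition laplacian :: "'x set \<Rightarrow> ('x \<Rightarrow> 'x) \<Rightarrow> ('x \<Rightarrow> 'x) \<Rightarrow> ('x \<Rightarrow> 'm::ab_group_add)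
    \<Rightarrow> ('x \<Rightarrow> 'm) \<Rightarrow> ('x \<Rightarrow> int)" where
  "laplacian X r i l g = (\<lambda>v. if v \<in> verts X r then
      (\<Sum>e\<in>{e \<in> halfedges X r. r e = v}. zdiv (g v - g (r (i e))) (l e)) else 0)"

definition lin_equiv :: "'m::ab_group_add set \<Rightarrow> 'x set \<Rightarrow> ('x \<Rightarrow> 'x) \<Rightarrow> ('x \<Rightarrow> 'x) \<Rightarrow> ('x \<Rightarrow> 'm)
    \<Rightarrow> ('x \<Rightarrow> int) \<Rightarrow> ('x \<Rightarrow> int) \<Rightarrow> bool" where
  "lin_equiv M X r i l D D' \<longleftrightarrow> (\<exists>g\<in>PL M X r i l. (\<lambda>v. D v - D' v) = laplacian X r i l g)"

definition lin_system :: "'m::ab_group_add set \<Rightarrow> 'x set \<Rightarrow> ('x \<Rightarrow> 'x) \<Rightarrow> ('x \<Rightarrow> 'x) \<Rightarrow> ('x \<Rightarrow> 'm)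
    \<Rightarrow> ('x \<Rightarrow> int) \<Rightarrow> ('x \<Rightarrow> int) set" where
  "lin_system M X r i l D = {E \<in> divisors X r. (\<forall>v. 0 \<le> E v) \<and> lin_equiv M X r i l E D}"

definition rank :: "'m::ab_group_add set \<Rightarrow> 'x set \<Rightarrow> ('x \<Rightarrow> 'x) \<Rightarrow> ('x \<Rightarrow> 'x) \<Rightarrow> ('x \<Rightarrow> 'm)
    \<Rightarrow> ('x \<Rightarrow> int) \<Rightarrow> int" where
  "rank M X r i l D = (GREATEST k::int. \<forall>F\<in>divisors X r. (\<forall>v. 0 \<le> F v) \<and> deg X r F = k \<longrightarrow>
       lin_system M X r i l (\<lambda>v. D v - F v) \<noteq> {})"

definition contr_gen :: "'x set \<Rightarrow> ('x \<Rightarrow> 'x) \<Rightarrow> ('x \<Rightarrow> 'x) \<Rightarrow> ('x \<Rightarrow> 'm) \<Rightarrow> ('m \<Rightarrow> 'n::zero)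
    \<Rightarrow> ('x \<times> 'x) set" where
  "contr_gen X r i l f = {(e, y) | e y. e \<in> halfedges X r \<and> f (l e) = 0 \<and> y \<in> {r e, i e, r (i e)}}"

definition contr_rel :: "'x set \<Rightarrow> ('x \<Rightarrow> 'x) \<Rightarrow> ('x \<Rightarrow> 'x) \<Rightarrow> ('x \<Rightarrow> 'm) \<Rightarrow> ('m \<Rightarrow> 'n::zero)
    \<Rightarrow> ('x \<times> 'x) set" where
  "contr_rel X r i l f = (contr_gen X r i l f \<union> (contr_gen X r i l f)\<inverse>)\<^sup>* \<inter> (X \<times> X)"

definition contr_X :: "'x set \<Rightarrow> ('x \<Rightarrow> 'x) \<Rightarrow> ('x \<Rightarrow> 'x) \<Rightarrow> ('x \<Rightarrow> 'm) \<Rightarrow> ('m \<Rightarrow> 'n::zero)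
    \<Rightarrow> 'x set set" where
  "contr_X X r i l f = X // contr_rel X r i l f"

definition contr_r :: "'x set \<Rightarrow> ('x \<Rightarrow> 'x) \<Rightarrow> ('x \<Rightarrow> 'x) \<Rightarrow> ('x \<Rightarrow> 'm) \<Rightarrow> ('m \<Rightarrow> 'n::zero)
    \<Rightarrow> 'x set \<Rightarrow> 'x set" where
  "contr_r X r i l f C = contr_rel X r i l f `` (r ` C)"

definition contr_i :: "'x set \<Rightarrow> ('x \<Rightarrow> 'x) \<Rightarrow> ('x \<Rightarrow> 'x) \<Rightarrow> ('x \<Rightarrow> 'm) \<Rightarrow> ('m \<Rightarrow> 'n::zero)
    \<Rightarrow> 'x set \<Rightarrow> 'x set" where
  "contr_i X r i l f C = contr_rel X r i l f `` (i ` C)"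

definition contr_l :: "('x \<Rightarrow> 'm) \<Rightarrow> ('m \<Rightarrow> 'n) \<Rightarrow> 'x set \<Rightarrow> 'n" where
  "contr_l l f C = f (l (SOME x. x \<in> C))"

definition contr_map :: "'x set \<Rightarrow> ('x \<Rightarrow> 'x) \<Rightarrow> ('x \<Rightarrow> 'x) \<Rightarrow> ('x \<Rightarrow> 'm) \<Rightarrow> ('m \<Rightarrow> 'n::zero)
    \<Rightarrow> 'x \<Rightarrow> 'x set" where
  "contr_map X r i l f x = contr_rel X r i l f `` {x}"

definition push_div :: "'x set \<Rightarrow> ('x \<Rightarrow> 'x) \<Rightarrow> ('x \<Rightarrow> 'x) \<Rightarrow> ('x \<Rightarrow> 'm) \<Rightarrow> ('m \<Rightarrow> 'n::zero)
    \<Rightarrow> ('x \<Rightarrow> int) \<Rightarrow> ('x set \<Rightarrow> int)" where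
  "push_div X r i l f D = (\<lambda>C. if C \<in> verts (contr_X X r i l f) (contr_r X r i l f)
      then (\<Sum>v\<in>{v \<in> verts X r. contr_map X r i l f v = C}. D v) else 0)"

end

theory Submission
  imports Defs
begin

lemma it_add: "(((+) (m::'a::ab_group_add)) ^^ (a+b)) 0 = (((+) m) ^^ a) 0 + (((+) m) ^^ b) 0"
  by (induction a) (auto simp: add.assoc)

lemma zsmul_succ: "zsmul (k+1) m = zsmul k m + m"
proof (cases "k \<ge> 0")
  case True
  then have "nat (k+1) = Suc (nat k)" by simp
  then show ?thesis using True by (simp add: zsmul_def add.commute)
next
  case False
  show ?thesis
  proof (cases "k = -1")
    case True then show ?thesis by (simp add: zsmul_def)
  next
    case False2: False
    with False have "nat (-k) = Suc (nat (-(k+1)))" "\<not> 0 \<le> k+1" by auto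
    then show ?thesis using False by (simp add: zsmul_def algebra_simps)
  qed
qed

lemma zsmul_0 [simp]: "zsmul 0 m = 0" by (simp add: zsmul_def)

lemma zsmul_pred: "zsmul (k - 1) m = zsmul k m - m"
  using zsmul_succ[of "k-1" m] by (simp add: algebra_simps)

lemma zsmul_add: "zsmul (k + j) m = zsmul k m + zsmul j m"
proof (induction j rule: int_induct[where k=0])
  case base then show ?case by simp
next
  case (step1 j) then show ?case using zsmul_succ[of "k+j" m] zsmul_succ[of j m]
    by (simp add: algebra_simps)
next
  case (step2 j)
  have "zsmul (k + (j - 1)) m = zsmul (k+j) m - m" using zsmul_pred[of "k+j" m] by (simp add: algebra_simps)
  also have "\<dots> = zsmul k m + (zsmul j m - m)" using step2 by (simp add: algebra_simps)
  also have "\<dots> = zsmul k m + zsmul (j - 1) m" by (simp add: zsmul_pred)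
  finally show ?case .
qed

lemma zsmul_neg: "zsmul (-k) m = - zsmul k m"
  using zsmul_add[of "-k" k m] by (simp add: eq_neg_iff_add_eq_0)

lemma zsmul_diff: "zsmul (k - j) m = zsmul k m - zsmul j m"
  using zsmul_add[of k "-j" m] zsmul_neg[of j m] by simp

lemma zsmul_zero [simp]: "zsmul k (0::'a::ab_group_add) = 0"
proof -
  have "(((+) (0::'a)) ^^ n) 0 = 0" for n by (induction n) auto
  then show ?thesis by (simp add: zsmul_def)
qed

lemma zsmul_1: "zsmul 1 m = m" using zsmul_succ[of 0 m] by simp

lemma zsmul_in: assumes "sharp_monoid M" "m \<in> M" "n \<ge> 0" shows "zsmul n m \<in> M"
  using assms(3)
proof (induction n rule: int_ge_induct[where k=0])
  case base then show ?case using assms by (simp add: sharp_monoid_def)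
next
  case (step n) then show ?case using assms by (simp add: zsmul_succ sharp_monoid_def)
qed

lemma zsmul_inj:
  assumes M: "sharp_monoid M" and m: "m \<in> M" "m \<noteq> 0" and eq: "zsmul k m = zsmul j m"
  shows "k = j"
proof (rule ccontr)
  assume ne: "k \<noteq> j"
  have z: "zsmul (k - j) m = 0" "zsmul (j - k) m = 0" using eq by (simp_all add: zsmul_diff)
  obtain n where n: "n > 0" "zsmul n m = 0"
    using ne z by (metis diff_gt_0_iff_gt linorder_neqE_linordered_idom)
  have "zsmul n m = zsmul (n-1) m + m" using zsmul_succ[of "n-1" m] by simp
  moreover have "zsmul (n-1) m \<in> M" using zsmul_in[OF M m(1)] n by simp
  ultimately have "m = 0" using M m n unfolding sharp_monoid_def
    by (metis add.commute)
  with m show False by simp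
qed

lemma zdiv_zsmul:
  assumes "sharp_monoid M" "m \<in> M" "m \<noteq> 0"
  shows "zdiv (zsmul k m) m = k"
  unfolding zdiv_def
  by (rule the_equality) (use zsmul_inj[OF assms] in auto)

lemma zdiv_neg:
  assumes "sharp_monoid M" "m \<in> M" "m \<noteq> 0" "x \<in> zspan m"
  shows "zdiv (- x) m = - zdiv x m"
proof -
  obtain k where "x = zsmul k m" using assms(4) by (auto simp: zspan_def)
  then show ?thesis using zdiv_zsmul[OF assms(1-3)] zsmul_neg[of k m] by metis
qed

lemma zsmul_gp: "sharp_monoid M \<Longrightarrow> m \<in> M \<Longrightarrow> zsmul k m \<in> gp M"
proof (cases "k \<ge> 0")
  case True
  assume "sharp_monoid M" "m \<in> M"
  then show ?thesis using True zsmul_in[of M m k] unfolding gp_def sharp_monoid_def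
    by (metis (mono_tags, lifting) diff_zero mem_Collect_eq)
next
  case False
  assume a: "sharp_monoid M" "m \<in> M"
  then have "zsmul (-k) m \<in> M" using False zsmul_in[of M m "-k"] by simp
  then have "0 - zsmul (-k) m \<in> gp M" using a unfolding gp_def sharp_monoid_def by blast
  then show ?thesis by (simp add: zsmul_neg)
qed

locale ctx =
  fixes M :: "'m::ab_group_add set" and N :: "'n::ab_group_add set"
    and X :: "'x set" and r i :: "'x \<Rightarrow> 'x" and l :: "'x \<Rightarrow> 'm"
    and f :: "'m \<Rightarrow> 'n"
  assumes M: "sharp_monoid M" and N: "sharp_monoid N"
    and G: "metrised_graph M X r i l"
    and hom: "monoid_hom M N f"
begin

definition ft :: "'m \<Rightarrow> 'n" where
  "ft x = (let p = SOME p. fst p \<in> M \<and> snd p \<in> M \<and> x = fst p - snd p in f (fst p) - f (snd p))"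

lemma Madd: "a \<in> M \<Longrightarrow> b \<in> M \<Longrightarrow> a + b \<in> M" using M by (simp add: sharp_monoid_def)
lemma fadd: "a \<in> M \<Longrightarrow> b \<in> M \<Longrightarrow> f (a + b) = f a + f b" using hom by (simp add: monoid_hom_def)
lemma fin: "a \<in> M \<Longrightarrow> f a \<in> N" using hom by (simp add: monoid_hom_def)
lemma f0: "f 0 = 0" using hom by (simp add: monoid_hom_def)
lemma M0: "0 \<in> M" using M by (simp add: sharp_monoid_def)

lemma ft_eq: assumes "a \<in> M" "b \<in> M" shows "ft (a - b) = f a - f b"
proof -
  define p where "p = (SOME p. fst p \<in> M \<and> snd p \<in> M \<and> a - b = fst p - snd p)"
  have "fst p \<in> M \<and> snd p \<in> M \<and> a - b = fst p - snd p"
    unfolding p_def by (rule someI[where x="(a,b)"]) (use assms in auto)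
  then obtain c d where cd: "p = (c,d)" "c \<in> M" "d \<in> M" "a - b = c - d" by (cases p) auto
  then have "a + d = c + b" by (simp add: algebra_simps diff_eq_eq eq_diff_eq)
  then have "f a + f d = f c + f b" using fadd assms cd by metis
  then have "f a - f b = f c - f d" by (simp add: algebra_simps diff_eq_eq eq_diff_eq)
  then show ?thesis unfolding ft_def p_def[symmetric] using cd by simp
qed

lemma gpE: assumes "x \<in> gp M" obtains a b where "a \<in> M" "b \<in> M" "x = a - b"
  using assms unfolding gp_def by blast

lemma gp_add: "x \<in> gp M \<Longrightarrow> y \<in> gp M \<Longrightarrow> x + y \<in> gp M"
  apply (elim gpE) subgoal for a b c d
    unfolding gp_def by (rule CollectI, rule exI[of _ "a+c"], rule exI[of _ "b+d"]) (auto simp: Madd algebra_simps)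
  done

lemma gp_neg: "x \<in> gp M \<Longrightarrow> - x \<in> gp M"
  apply (elim gpE) subgoal for a b unfolding gp_def by auto done

lemma gp_diff: "x \<in> gp M \<Longrightarrow> y \<in> gp M \<Longrightarrow> x - y \<in> gp M"
  using gp_add gp_neg by (metis diff_conv_add_uminus)

lemma ft_add: assumes "x \<in> gp M" "y \<in> gp M" shows "ft (x + y) = ft x + ft y"
proof -
  obtain a b c d where abcd: "a \<in> M" "b \<in> M" "x = a - b" "c \<in> M" "d \<in> M" "y = c - d"
    using assms by (metis gpE)
  have "x + y = (a + c) - (b + d)" using abcd by (simp add: algebra_simps)
  then have 1: "ft (x + y) = f (a + c) - f (b + d)" using ft_eq[of "a+c" "b+d"] Madd abcd by metis
  have 2: "ft x = f a - f b" "ft y = f c - f d" using ft_eq abcd by simp_all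
  have 3: "f (a + c) = f a + f c" "f (b + d) = f b + f d" using fadd abcd by auto
  show ?thesis unfolding 1 2 3 by (simp add: algebra_simps)
qed

lemma ft_neg: assumes "x \<in> gp M" shows "ft (- x) = - ft x"
  using ft_add[OF assms gp_neg[OF assms]] ft_eq[OF M0 M0] by (simp add: eq_neg_iff_add_eq_0 add.commute)

lemma ft_diff: assumes "x \<in> gp M" "y \<in> gp M" shows "ft (x - y) = ft x - ft y"
  using ft_add[OF assms(1) gp_neg[OF assms(2)]] ft_neg[OF assms(2)] by simp

lemma ft_M: "a \<in> M \<Longrightarrow> ft a = f a" using ft_eq[of a 0] M0 f0 by simp

lemma ft_zsmul: assumes m: "m \<in> M" shows "ft (zsmul k m) = zsmul k (f m)"
proof (induction k rule: int_induct[where k=0])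
  case base then show ?case using ft_M M0 f0 by simp
next
  case (step1 j) then show ?case
    using ft_add[OF zsmul_gp[OF M m] zsmul_gp[OF M m, of 1]] by (simp add: zsmul_succ zsmul_1 ft_M m)
next
  case (step2 j) then show ?case
    using ft_diff[OF zsmul_gp[OF M m] zsmul_gp[OF M m, of 1]] by (simp add: zsmul_pred zsmul_1 ft_M m)
qed

end

context ctx begin

abbreviation "V \<equiv> verts X r"
abbreviation "H \<equiv> halfedges X r"
abbreviation "R \<equiv> contr_rel X r i l f"
abbreviation "gen \<equiv> contr_gen X r i l f"
abbreviation "cls \<equiv> contr_map X r i l f"
abbreviation "Hnc \<equiv> {e \<in> H. f (l e) \<noteq> 0}"
abbreviation "X' \<equiv> contr_X X r i l f"
abbreviation "r' \<equiv> contr_r X r i l f"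
abbreviation "i' \<equiv> contr_i X r i l f"
abbreviation "l' \<equiv> contr_l l f"
abbreviation "V' \<equiv> verts X' r'"
abbreviation "H' \<equiv> halfedges X' r'"

lemma finX: "finite X" using G by (simp add: metrised_graph_def is_graph_def)
lemma gX: assumes "x \<in> X" shows "r x \<in> X" "i x \<in> X" "r (r x) = r x" "i (i x) = x"
  "i x = x \<longleftrightarrow> r x = x" "l x \<in> M" "l (i x) = l x" "l x = 0 \<longleftrightarrow> x \<in> V"
  using G assms by (auto simp: metrised_graph_def is_graph_def)

lemma V_iff: "x \<in> V \<longleftrightarrow> x \<in> X \<and> r x = x" by (simp add: verts_def)
lemma H_iff: "x \<in> H \<longleftrightarrow> x \<in> X \<and> r x \<noteq> x" by (auto simp: halfedges_def verts_def)
lemma H_r: "e \<in> H \<Longrightarrow> r e \<in> V" using gX by (auto simp: H_iff V_iff)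
lemma H_i: "e \<in> H \<Longrightarrow> i e \<in> H"
proof -
  assume e: "e \<in> H"
  then have eX: "e \<in> X" "r e \<noteq> e" by (auto simp: H_iff)
  have "r (i e) \<noteq> i e"
  proof
    assume "r (i e) = i e"
    then have "i (i e) = i e" using gX(5)[of "i e"] gX(2)[OF eX(1)] by simp
    then have "i e = e" using gX(4)[OF eX(1)] by simp
    then show False using gX(5)[OF eX(1)] eX by simp
  qed
  then show ?thesis using gX(2)[OF eX(1)] by (simp add: H_iff)
qed
lemma Hnc_i: "e \<in> Hnc \<Longrightarrow> i e \<in> Hnc" using H_i gX by (auto simp: H_iff)
lemma finV: "finite V" using finX by (simp add: verts_def)
lemma finH: "finite H" using finX by (simp add: halfedges_def)

lemma R_sub: "R \<subseteq> X \<times> X" by (auto simp: contr_rel_def)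
lemma equivR: "equiv X R"
proof -
  have s: "sym ((gen \<union> gen\<inverse>)\<^sup>*)" by (rule sym_rtrancl[OF sym_Un_converse])
  show ?thesis unfolding equiv_def
  proof (intro conjI)
    show "refl_on X R" unfolding refl_on_def contr_rel_def by auto
    show "R \<subseteq> X \<times> X" by (rule R_sub)
    show "sym R" using s unfolding contr_rel_def sym_def by blast
    show "trans R" unfolding contr_rel_def trans_def by (blast intro: rtrancl_trans)
  qed
qed

lemma gen_R: "(a, b) \<in> gen \<Longrightarrow> (a, b) \<in> R"
  unfolding contr_rel_def
  by (auto simp: contr_gen_def H_iff gX)

lemma cls_def': "cls x = R `` {x}" by (simp add: contr_map_def)

lemma to_r: assumes "x \<in> X" "x \<notin> Hnc" shows "(x, r x) \<in> R"
proof (cases "r x = x")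
  case True then show ?thesis using assms by (simp add: contr_rel_def)
next
  case False
  then have "x \<in> H" "f (l x) = 0" using assms by (auto simp: H_iff)
  then have "(x, r x) \<in> gen" by (auto simp: contr_gen_def)
  then show ?thesis by (rule gen_R)
qed

lemma cls_Hnc: assumes e: "e \<in> Hnc" shows "cls e = {e}"
proof -
  have "y = e" if "(e, y) \<in> (gen \<union> gen\<inverse>)\<^sup>*" for y
    using that
  proof (induction rule: rtrancl_induct)
    case base then show ?case by simp
  next
    case (step y z)
    then have "(e, z) \<in> gen \<or> (z, e) \<in> gen" by auto
    then show ?case
    proof
      assume "(e, z) \<in> gen" then have False using e by (auto simp: contr_gen_def)
      then show ?thesis ..
    next
      assume "(z, e) \<in> gen"
      then have z: "z \<in> H" "f (l z) = 0" "e = r z \<or> e = i z \<or> e = r (i z)"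
        by (auto simp: contr_gen_def)
      have "z \<in> X" "i z \<in> X" using z H_iff gX by auto
      then have False using z e gX[of z] gX[of "i z"] by (auto simp: H_iff)
      then show ?thesis ..
    qed
  qed
  moreover have "e \<in> X" using e by (simp add: H_iff)
  ultimately show ?thesis unfolding cls_def' contr_rel_def by auto
qed

lemma cls_in: "x \<in> X \<Longrightarrow> x \<in> cls x" by (simp add: cls_def' contr_rel_def)

lemma cls_eq: "x \<in> X \<Longrightarrow> y \<in> X \<Longrightarrow> cls x = cls y \<longleftrightarrow> (x, y) \<in> R"
  using eq_equiv_class_iff[OF equivR] by (simp add: cls_def')

lemma vclass_noHnc: assumes v: "v \<in> V" and y: "y \<in> cls v" shows "y \<notin> Hnc"
proof
  assume yH: "y \<in> Hnc"
  have "(v, y) \<in> R" using y by (simp add: cls_def')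
  then have "(y, v) \<in> R" using equivR by (meson equiv_def symE)
  then have "v \<in> cls y" by (simp add: cls_def')
  then have "v = y" using cls_Hnc[OF yH] by simp
  then show False using v yH by (simp add: V_iff H_iff)
qed

lemma r'_v: assumes v: "v \<in> V" shows "r' (cls v) = cls v"
proof -
  have vX: "v \<in> X" using v by (simp add: V_iff)
  have sub: "r ` cls v \<subseteq> cls v"
  proof
    fix z assume "z \<in> r ` cls v"
    then obtain y where y: "y \<in> cls v" "z = r y" by auto
    have "(v, y) \<in> R" using y by (simp add: cls_def')
    moreover have "(y, r y) \<in> R" using to_r vclass_noHnc[OF v y(1)] y R_sub by (meson \<open>(v,y) \<in> R\<close> mem_Sigma_iff subsetD)
    ultimately show "z \<in> cls v" using y equivR by (simp add: cls_def') (meson equiv_def transE)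
  qed
  have "R `` (r ` cls v) \<subseteq> cls v"
  proof
    fix z assume "z \<in> R `` (r ` cls v)"
    then obtain y where "y \<in> cls v" "(y, z) \<in> R" using sub by blast
    then show "z \<in> cls v" using equivR by (simp add: cls_def') (meson equiv_def transE)
  qed
  moreover have "v \<in> r ` cls v" using cls_in[OF vX] v by (auto simp: V_iff intro: image_eqI[of _ _ v])
  then have "cls v \<subseteq> R `` (r ` cls v)" by (auto simp: cls_def')
  ultimately show ?thesis by (auto simp: contr_r_def)
qed

lemma X'_cases: assumes "C \<in> X'"
  obtains (vert) v where "v \<in> V" "C = cls v" | (edge) e where "e \<in> Hnc" "C = {e}"
proof -
  obtain x where x: "x \<in> X" "C = cls x" using assms
    by (auto simp: contr_X_def cls_def' elim: quotientE)
  show ?thesis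
  proof (cases "x \<in> Hnc")
    case True then show ?thesis using edge x cls_Hnc by auto
  next
    case False
    then have "(x, r x) \<in> R" using to_r x by auto
    then have "C = cls (r x)" using x cls_eq gX R_sub by auto
    moreover have "r x \<in> V" using x gX by (simp add: V_iff)
    ultimately show ?thesis using vert by auto
  qed
qed

lemma cls_X': "x \<in> X \<Longrightarrow> cls x \<in> X'" by (simp add: contr_X_def cls_def' quotientI)

lemma r'_e: assumes "e \<in> Hnc" shows "r' {e} = cls (r e)"
  by (simp add: contr_r_def cls_def')

lemma i'_e: assumes "e \<in> Hnc" shows "i' {e} = {i e}"
  using cls_Hnc[OF Hnc_i[OF assms]] by (simp add: contr_i_def cls_def')

lemma l'_e: "l' {e} = f (l e)" by (simp add: contr_l_def)

lemma V'_eq: "V' = cls ` V"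
proof
  show "cls ` V \<subseteq> V'" using r'_v cls_X' by (auto simp: verts_def V_iff)
  show "V' \<subseteq> cls ` V"
  proof
    fix C assume C: "C \<in> V'"
    then have CX: "C \<in> X'" "r' C = C" by (auto simp: verts_def)
    from CX(1) show "C \<in> cls ` V"
    proof (cases rule: X'_cases)
      case (vert v) then show ?thesis by auto
    next
      case (edge e)
      then have "r e \<in> cls (r e)" using cls_in gX by (auto simp: H_iff)
      then have "r e = e" using CX(2) r'_e[OF edge(1)] edge by auto
      then show ?thesis using edge by (auto simp: H_iff)
    qed
  qed
qed

lemma H'_eq: "H' = (\<lambda>e. {e}) ` Hnc"
proof
  show "H' \<subseteq> (\<lambda>e. {e}) ` Hnc"
  proof
    fix C assume C: "C \<in> H'"
    then have CX: "C \<in> X'" "C \<notin> V'" by (auto simp: halfedges_def)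
    from CX(1) show "C \<in> (\<lambda>e. {e}) ` Hnc"
    proof (cases rule: X'_cases)
      case (vert v) then show ?thesis using CX V'_eq by auto
    next
      case (edge e) then show ?thesis by auto
    qed
  qed
  show "(\<lambda>e. {e}) ` Hnc \<subseteq> H'"
  proof
    fix C assume "C \<in> (\<lambda>e. {e}) ` Hnc"
    then obtain e where e: "e \<in> Hnc" "C = {e}" by auto
    have "C \<in> X'" using cls_X'[of e] cls_Hnc[OF e(1)] e by (auto simp: H_iff)
    moreover have "C \<notin> V'"
    proof
      assume "C \<in> V'"
      then obtain v where "v \<in> V" "C = cls v" using V'_eq by auto
      then have "v \<in> {e}" using e cls_in by (auto simp: V_iff)
      then show False using e \<open>v \<in> V\<close> by (auto simp: V_iff H_iff)
    qed
    ultimately show "C \<in> H'" by (simp add: halfedges_def)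
  qed
qed

lemma finV': "finite V'" using V'_eq finV by simp

end

lemma pair_sum_zero:
  fixes h :: "'a \<Rightarrow> int"
  assumes "finite A" "\<And>e. e \<in> A \<Longrightarrow> s e \<in> A" "\<And>e. e \<in> A \<Longrightarrow> s (s e) = e"
    "\<And>e. e \<in> A \<Longrightarrow> h (s e) = - h e"
  shows "sum h A = 0"
proof -
  have b: "bij_betw s A A"
    by (rule bij_betw_byWitness[where f'=s]) (use assms in auto)
  have "sum h A = sum (h \<circ> s) A" using sum.reindex_bij_betw[OF b, of h] by simp
  also have "\<dots> = - sum h A" using assms(4) by (simp add: sum_negf)
  finally show ?thesis by simp
qed

context ctx begin

lemma PL_V: "g \<in> PL M X r i l \<Longrightarrow> v \<in> V \<Longrightarrow> g v \<in> gp M" by (simp add: PL_def)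
lemma PL_H: "g \<in> PL M X r i l \<Longrightarrow> e \<in> H \<Longrightarrow> \<exists>k. g (r e) - g (r (i e)) = zsmul k (l e)"
  by (auto simp: PL_def zspan_def)

lemma lH: "e \<in> H \<Longrightarrow> l e \<in> M \<and> l e \<noteq> 0" using gX[of e] by (auto simp: H_iff V_iff)

lemma ft_gp: assumes "x \<in> gp M" shows "ft x \<in> gp N"
proof -
  obtain a b where "a \<in> M" "b \<in> M" "x = a - b" using assms by (metis gpE)
  then show ?thesis using ft_eq fin unfolding gp_def by blast
qed

lemma ft_edge: assumes g: "g \<in> PL M X r i l" and e: "e \<in> H"
  obtains k where "g (r e) - g (r (i e)) = zsmul k (l e)"
    "ft (g (r e)) - ft (g (r (i e))) = zsmul k (f (l e))"
proof -
  obtain k where k: "g (r e) - g (r (i e)) = zsmul k (l e)" using PL_H[OF g e] by blast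
  have "r e \<in> V" "r (i e) \<in> V" using H_r e H_i by auto
  then have "ft (g (r e)) - ft (g (r (i e))) = ft (g (r e) - g (r (i e)))"
    using ft_diff PL_V[OF g] by simp
  also have "\<dots> = zsmul k (f (l e))" using k ft_zsmul lH[OF e] by simp
  finally show ?thesis using that k by blast
qed

lemma step_eq: assumes g: "g \<in> PL M X r i l" and ab: "(a, b) \<in> gen"
  shows "ft (g (r a)) = ft (g (r b))"
proof -
  from ab have a: "a \<in> H" "f (l a) = 0" "b = r a \<or> b = i a \<or> b = r (i a)"
    by (auto simp: contr_gen_def)
  have aX: "a \<in> X" "i a \<in> X" using a H_iff gX by auto
  obtain k where "ft (g (r a)) - ft (g (r (i a))) = zsmul k (f (l a))" using ft_edge[OF g a(1)] by blast
  then have eq: "ft (g (r a)) = ft (g (r (i a)))" using a by simp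
  show ?thesis using a(3) eq gX[OF aX(1)] gX[OF aX(2)] by auto
qed

lemma R_eq: assumes g: "g \<in> PL M X r i l" and xy: "(x, y) \<in> R"
  shows "ft (g (r x)) = ft (g (r y))"
proof -
  have "(x, y) \<in> (gen \<union> gen\<inverse>)\<^sup>*" using xy by (simp add: contr_rel_def)
  then show ?thesis
  proof (induction rule: rtrancl_induct)
    case base then show ?case by simp
  next
    case (step y z) then show ?case using step_eq[OF g] by auto
  qed
qed

definition sig :: "'x set \<Rightarrow> 'x" where "sig C = (SOME v. v \<in> V \<and> cls v = C)"

lemma sig: assumes "w \<in> V" shows "sig (cls w) \<in> V" "cls (sig (cls w)) = cls w"
proof -
  have "sig (cls w) \<in> V \<and> cls (sig (cls w)) = cls w"
    unfolding sig_def by (rule someI[of _ w]) (use assms in auto)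
  then show "sig (cls w) \<in> V" "cls (sig (cls w)) = cls w" by auto
qed

definition gl :: "('x \<Rightarrow> 'm) \<Rightarrow> 'x set \<Rightarrow> 'n" where "gl g C = ft (g (sig C))"

lemma gl_cls: assumes g: "g \<in> PL M X r i l" and w: "w \<in> V" shows "gl g (cls w) = ft (g w)"
proof -
  have "(sig (cls w), w) \<in> R" using sig[OF w] cls_eq w by (auto simp: V_iff)
  then have "ft (g (r (sig (cls w)))) = ft (g (r w))" by (rule R_eq[OF g])
  then show ?thesis using sig[OF w] w by (simp add: gl_def V_iff)
qed

lemma gl_edge: assumes g: "g \<in> PL M X r i l" and e: "e \<in> H"
  obtains k where "g (r e) - g (r (i e)) = zsmul k (l e)"
    "gl g (cls (r e)) - gl g (cls (r (i e))) = zsmul k (f (l e))"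
  using ft_edge[OF g e] gl_cls[OF g] H_r e H_i by metis

lemma gl_PL: assumes g: "g \<in> PL M X r i l" shows "gl g \<in> PL N X' r' i' l'"
  unfolding PL_def
proof (intro CollectI conjI ballI)
  fix C assume "C \<in> V'"
  then obtain w where "w \<in> V" "C = cls w" using V'_eq by auto
  then show "gl g C \<in> gp N" using gl_cls[OF g] ft_gp PL_V[OF g] by simp
next
  fix C assume "C \<in> H'"
  then obtain e where e: "e \<in> Hnc" "C = {e}" using H'_eq by auto
  have e2: "i e \<in> Hnc" using Hnc_i[OF e(1)] .
  obtain k where "gl g (cls (r e)) - gl g (cls (r (i e))) = zsmul k (f (l e))"
    using gl_edge[OF g] e by blast
  then show "gl g (r' C) - gl g (r' (i' C)) \<in> zspan (l' C)"
    using e r'_e[OF e(1)] i'_e[OF e(1)] r'_e[OF e2] l'_e by (auto simp: zspan_def)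
qed

end

context ctx begin

lemma finH': "finite H'" using H'_eq finH by simp
lemma finHnc: "finite Hnc" using finH by simp

lemma lap'_deg: assumes g': "g' \<in> PL N X' r' i' l'"
  shows "sum (laplacian X' r' i' l' g') V' = 0"
proof -
  define h where "h C' = zdiv (g' (r' C') - g' (r' (i' C'))) (l' C')" for C'
  have 1: "laplacian X' r' i' l' g' C = (\<Sum>C'\<in>H'. if r' C' = C then h C' else 0)" if "C \<in> V'" for C
  proof -
    have "laplacian X' r' i' l' g' C = (\<Sum>C'\<in>{C' \<in> H'. r' C' = C}. h C')"
      using that unfolding laplacian_def h_def by (auto intro!: sum.cong)
    also have "\<dots> = (\<Sum>C'\<in>H'. if r' C' = C then h C' else 0)"
      by (rule sum.inter_filter[OF finH'])
    finally show ?thesis .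
  qed
  have rV: "r' C' \<in> V'" if CH: "C' \<in> H'" for C'
  proof -
    obtain e where "e \<in> Hnc" "C' = {e}" using CH H'_eq by auto
    then show ?thesis using r'_e V'_eq H_r by auto
  qed
  have "sum (laplacian X' r' i' l' g') V' = (\<Sum>C\<in>V'. \<Sum>C'\<in>H'. if r' C' = C then h C' else 0)"
    using 1 by (rule sum.cong[OF refl])
  also have "\<dots> = (\<Sum>C'\<in>H'. \<Sum>C\<in>V'. if r' C' = C then h C' else 0)" by (rule sum.swap)
  also have "\<dots> = (\<Sum>C'\<in>H'. h C')" using rV finV' by (auto intro!: sum.cong)
  also have "\<dots> = (\<Sum>e\<in>Hnc. h {e})" unfolding H'_eq by (rule sum.reindex_cong[where l="\<lambda>e. {e}"]) (auto simp: inj_on_def)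
  also have "\<dots> = 0"
  proof (rule pair_sum_zero[where s=i, OF finHnc])
    fix e assume e: "e \<in> Hnc"
    show "i e \<in> Hnc" using Hnc_i[OF e] .
    have eX: "e \<in> X" using e by (simp add: H_iff)
    show "i (i e) = e" using gX(4)[OF eX] .
    have e2: "i e \<in> Hnc" using Hnc_i[OF e] .
    have "{e} \<in> H'" using e H'_eq by auto
    then have sp: "g' (cls (r e)) - g' (cls (r (i e))) \<in> zspan (f (l e))"
      using g' r'_e[OF e] i'_e[OF e] r'_e[OF e2] l'_e unfolding PL_def by auto
    have fl: "f (l e) \<in> N" "f (l e) \<noteq> 0" using e lH fin by auto
    have "h {i e} = zdiv (- (g' (cls (r e)) - g' (cls (r (i e))))) (f (l e))"
      unfolding h_def using r'_e[OF e2] i'_e[OF e2] gX[OF eX] l'_e r'_e[OF e] by simp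
    also have "\<dots> = - zdiv (g' (cls (r e)) - g' (cls (r (i e)))) (f (l e))"
      by (rule zdiv_neg[OF N fl sp])
    also have "\<dots> = - h {e}" unfolding h_def using r'_e[OF e] i'_e[OF e] r'_e[OF e2] l'_e by simp
    finally show "h {i e} = - h {e}" .
  qed
  finally show ?thesis .
qed

lemma push_lap: assumes g: "g \<in> PL M X r i l" and C: "C \<in> V'"
  shows "push_div X r i l f (laplacian X r i l g) C = laplacian X' r' i' l' (gl g) C"
proof -
  define t where "t e = zdiv (g (r e) - g (r (i e))) (l e)" for e
  define HC1 where "HC1 = {e \<in> Hnc. cls (r e) = C}"
  define HC0 where "HC0 = {e \<in> H. f (l e) = 0 \<and> cls (r e) = C}"
  have lapv: "laplacian X r i l g v = (\<Sum>e\<in>H. if r e = v then t e else 0)" if "v \<in> V" for v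
  proof -
    have "laplacian X r i l g v = (\<Sum>e\<in>{e \<in> H. r e = v}. t e)"
      using that unfolding laplacian_def t_def by (auto intro!: sum.cong)
    also have "\<dots> = (\<Sum>e\<in>H. if r e = v then t e else 0)" by (rule sum.inter_filter[OF finH])
    finally show ?thesis .
  qed
  have finVc: "finite {v \<in> V. cls v = C}" using finV by simp
  have "push_div X r i l f (laplacian X r i l g) C = (\<Sum>v\<in>{v \<in> V. cls v = C}. laplacian X r i l g v)"
    using C by (simp add: push_div_def)
  also have "\<dots> = (\<Sum>v\<in>{v \<in> V. cls v = C}. \<Sum>e\<in>H. if r e = v then t e else 0)"
    using lapv by (intro sum.cong) auto
  also have "\<dots> = (\<Sum>e\<in>H. \<Sum>v\<in>{v \<in> V. cls v = C}. if r e = v then t e else 0)" by (rule sum.swap)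
  also have "\<dots> = (\<Sum>e\<in>H. if cls (r e) = C then t e else 0)"
    using finVc H_r by (intro sum.cong) auto
  also have "\<dots> = (\<Sum>e\<in>{e\<in>H. cls (r e) = C}. t e)" by (rule sum.inter_filter[OF finH, symmetric])
  also have "{e\<in>H. cls (r e) = C} = HC1 \<union> HC0" unfolding HC1_def HC0_def by auto
  also have "sum t (HC1 \<union> HC0) = sum t HC1 + sum t HC0"
    by (rule sum.union_disjoint) (use finH in \<open>auto simp: HC1_def HC0_def\<close>)
  also have "sum t HC0 = 0"
  proof (rule pair_sum_zero[where s=i])
    show "finite HC0" using finH by (simp add: HC0_def)
    fix e assume e: "e \<in> HC0"
    then have eH: "e \<in> H" "f (l e) = 0" "cls (r e) = C" by (auto simp: HC0_def)
    have eX: "e \<in> X" using eH by (simp add: H_iff)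
    have "(e, r e) \<in> R" "(e, r (i e)) \<in> R" using eH by (auto intro!: gen_R simp: contr_gen_def)
    then have "(r e, r (i e)) \<in> R" using equivR by (meson equiv_def symE transE)
    then have "cls (r (i e)) = cls (r e)" using cls_eq R_sub by auto
    then show "i e \<in> HC0" using H_i[OF eH(1)] eH gX[OF eX] by (auto simp: HC0_def)
    show "i (i e) = e" using gX(4)[OF eX] .
    obtain k where k: "g (r e) - g (r (i e)) = zsmul k (l e)" using PL_H[OF g eH(1)] by blast
    have "t (i e) = zdiv (- (g (r e) - g (r (i e)))) (l e)" unfolding t_def using gX[OF eX] by simp
    also have "\<dots> = - t e" unfolding t_def
      by (rule zdiv_neg[OF M]) (use lH[OF eH(1)] k in \<open>auto simp: zspan_def\<close>)
    finally show "t (i e) = - t e" .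
  qed
  also have "sum t HC1 = (\<Sum>e\<in>HC1. zdiv (gl g C - gl g (cls (r (i e)))) (f (l e)))"
  proof (rule sum.cong[OF refl])
    fix e assume e: "e \<in> HC1"
    then have eH: "e \<in> H" "f (l e) \<noteq> 0" "cls (r e) = C" by (auto simp: HC1_def)
    obtain k where k: "g (r e) - g (r (i e)) = zsmul k (l e)"
      "gl g (cls (r e)) - gl g (cls (r (i e))) = zsmul k (f (l e))" using gl_edge[OF g eH(1)] by blast
    have "t e = k" unfolding t_def k(1) using zdiv_zsmul[OF M] lH[OF eH(1)] by simp
    moreover have "zdiv (gl g C - gl g (cls (r (i e)))) (f (l e)) = k"
      using eH(3) k(2) zdiv_zsmul[OF N] fin lH[OF eH(1)] eH(2) by auto
    ultimately show "t e = zdiv (gl g C - gl g (cls (r (i e)))) (f (l e))" by simp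
  qed
  also have "\<dots> + 0 = laplacian X' r' i' l' (gl g) C"
  proof -
    have "{C' \<in> H'. r' C' = C} = (\<lambda>e. {e}) ` HC1"
      unfolding H'_eq HC1_def using r'_e by auto
    then have "laplacian X' r' i' l' (gl g) C = (\<Sum>C'\<in>(\<lambda>e. {e}) ` HC1. zdiv (gl g C - gl g (r' (i' C'))) (l' C'))"
      using C unfolding laplacian_def by simp
    also have "\<dots> = (\<Sum>e\<in>HC1. zdiv (gl g C - gl g (r' (i' {e}))) (l' {e}))"
      by (subst sum.reindex) (auto simp: inj_on_def)
    also have "\<dots> = (\<Sum>e\<in>HC1. zdiv (gl g C - gl g (cls (r (i e)))) (f (l e)))"
      using i'_e r'_e Hnc_i l'_e by (intro sum.cong) (auto simp: HC1_def)
    finally show ?thesis by simp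
  qed
  finally show ?thesis .
qed

end

lemma int_greatest:
  fixes P :: "int \<Rightarrow> bool"
  assumes a: "P a" and B: "\<And>k. P k \<Longrightarrow> k \<le> B"
  shows "P (Greatest P) \<and> (\<forall>k. P k \<longrightarrow> k \<le> Greatest P)"
proof -
  define S where "S = {k. P k \<and> a \<le> k}"
  have finS: "finite S" by (rule finite_subset[of _ "{a..B}"]) (auto simp: S_def B)
  have aS: "a \<in> S" using a by (simp add: S_def)
  define m where "m = Max S"
  have mS: "m \<in> S" using Max_in[OF finS] aS unfolding m_def by auto
  have mge: "k \<le> m" if "P k" for k
  proof (cases "a \<le> k")
    case True then have "k \<in> S" using that by (simp add: S_def)
    then show ?thesis using finS by (simp add: m_def)
  next
    case False then show ?thesis using mS by (auto simp: S_def)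
  qed
  have "Greatest P = m"
    by (rule Greatest_equality) (use mS mge in \<open>auto simp: S_def\<close>)
  then show ?thesis using mS mge by (auto simp: S_def)
qed

context ctx begin

lemma push_in: "C \<in> V' \<Longrightarrow> push_div X r i l f G C = (\<Sum>v\<in>{v \<in> V. cls v = C}. G v)"
  by (simp add: push_div_def)
lemma push_out: "C \<notin> V' \<Longrightarrow> push_div X r i l f G C = 0"
  by (simp add: push_div_def)

lemma push_div_mem: "push_div X r i l f G \<in> divisors X' r'"
  by (simp add: divisors_def push_out)

lemma push_nonneg: "(\<And>v. 0 \<le> G v) \<Longrightarrow> 0 \<le> push_div X r i l f G C"
  by (simp add: push_div_def sum_nonneg)

lemma deg_push: "deg X' r' (push_div X r i l f G) = deg X r G"
proof -
  have "deg X' r' (push_div X r i l f G) = (\<Sum>C\<in>V'. \<Sum>v\<in>{v \<in> V. cls v = C}. G v)"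
    unfolding deg_def by (rule sum.cong[OF refl]) (simp add: push_in)
  also have "\<dots> = (\<Sum>C\<in>V'. \<Sum>v\<in>V. if cls v = C then G v else 0)"
    by (rule sum.cong[OF refl]) (rule sum.inter_filter[OF finV])
  also have "\<dots> = (\<Sum>v\<in>V. \<Sum>C\<in>V'. if cls v = C then G v else 0)" by (rule sum.swap)
  also have "\<dots> = (\<Sum>v\<in>V. G v)" using finV' V'_eq by (intro sum.cong) auto
  finally show ?thesis by (simp add: deg_def)
qed

lemma PP_PP': assumes k: "\<forall>F\<in>divisors X r. (\<forall>v. 0 \<le> F v) \<and> deg X r F = k \<longrightarrow>
       lin_system M X r i l (\<lambda>v. D v - F v) \<noteq> {}"
  shows "\<forall>F\<in>divisors X' r'. (\<forall>v. 0 \<le> F v) \<and> deg X' r' F = k \<longrightarrow>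
       lin_system N X' r' i' l' (\<lambda>v. push_div X r i l f D v - F v) \<noteq> {}"
proof (intro ballI impI)
  fix F' assume F'd: "F' \<in> divisors X' r'" and F'p: "(\<forall>v. 0 \<le> F' v) \<and> deg X' r' F' = k"
  define F where "F v = (if v \<in> V \<and> sig (cls v) = v then F' (cls v) else 0)" for v
  have Fd: "F \<in> divisors X r" by (simp add: divisors_def F_def)
  have Fp: "\<forall>v. 0 \<le> F v" using F'p by (simp add: F_def)
  have pF: "push_div X r i l f F = F'"
  proof
    fix C show "push_div X r i l f F C = F' C"
    proof (cases "C \<in> V'")
      case True
      then obtain w where w: "w \<in> V" "C = cls w" using V'_eq by auto
      have "push_div X r i l f F C = (\<Sum>v\<in>{v \<in> V. cls v = C}. if sig C = v then F' C else 0)"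
        unfolding push_in[OF True] by (rule sum.cong[OF refl]) (auto simp: F_def)
      also have "\<dots> = F' C" using finV sig[OF w(1)] w by simp
      finally show ?thesis .
    next
      case False then show ?thesis using F'd push_out by (simp add: divisors_def)
    qed
  qed
  have "deg X r F = k" using deg_push[of F] pF F'p by simp
  then obtain E where E: "E \<in> lin_system M X r i l (\<lambda>v. D v - F v)" using k Fd Fp by blast
  then have Ed: "\<forall>v. 0 \<le> E v" and "lin_equiv M X r i l E (\<lambda>v. D v - F v)"
    by (auto simp: lin_system_def)
  then obtain g where g: "g \<in> PL M X r i l" and eq: "(\<lambda>v. E v - (D v - F v)) = laplacian X r i l g"
    by (auto simp: lin_equiv_def)
  define E' where "E' = push_div X r i l f E"
  have "(\<lambda>C. E' C - (push_div X r i l f D C - F' C)) = laplacian X' r' i' l' (gl g)"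
  proof
    fix C show "E' C - (push_div X r i l f D C - F' C) = laplacian X' r' i' l' (gl g) C"
    proof (cases "C \<in> V'")
      case True
      have "E' C - (push_div X r i l f D C - F' C) = push_div X r i l f (\<lambda>v. E v - (D v - F v)) C"
        unfolding E'_def pF[symmetric] push_in[OF True] by (simp add: sum_subtractf)
      also have "\<dots> = laplacian X' r' i' l' (gl g) C" unfolding eq by (rule push_lap[OF g True])
      finally show ?thesis .
    next
      case False then show ?thesis using F'd push_out unfolding E'_def
        by (simp add: divisors_def laplacian_def)
    qed
  qed
  then have "E' \<in> lin_system N X' r' i' l' (\<lambda>v. push_div X r i l f D v - F' v)"
    unfolding lin_system_def lin_equiv_def using gl_PL[OF g] push_div_mem push_nonneg Ed
    by (auto simp: E'_def)
  then show "lin_system N X' r' i' l' (\<lambda>v. push_div X r i l f D v - F' v) \<noteq> {}" by blast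
qed

lemma PP'_bound:
  assumes k: "\<forall>F\<in>divisors X' r'. (\<forall>v. 0 \<le> F v) \<and> deg X' r' F = k \<longrightarrow>
       lin_system N X' r' i' l' (\<lambda>v. D' v - F v) \<noteq> {}"
  shows "k \<le> max (-1) (deg X' r' D')"
proof (cases "k < 0")
  case True then show ?thesis by simp
next
  case False
  obtain v0 where v0: "v0 \<in> V" using G by (auto simp: metrised_graph_def is_graph_def)
  define C0 where "C0 = cls v0"
  have C0: "C0 \<in> V'" using V'_eq v0 by (simp add: C0_def)
  define F' where "F' C = (if C = C0 then k else 0)" for C
  have "F' \<in> divisors X' r'" using C0 by (simp add: divisors_def F'_def)
  moreover have "\<forall>v. 0 \<le> F' v" using False by (simp add: F'_def)
  moreover have degF: "deg X' r' F' = k" using C0 finV' by (simp add: deg_def F'_def)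
  ultimately obtain E' where E': "E' \<in> lin_system N X' r' i' l' (\<lambda>v. D' v - F' v)" using k by blast
  then have Ep: "\<forall>v. 0 \<le> E' v" by (simp add: lin_system_def)
  from E' obtain g' where g': "g' \<in> PL N X' r' i' l'"
    and eq: "(\<lambda>v. E' v - (D' v - F' v)) = laplacian X' r' i' l' g'"
    by (auto simp: lin_system_def lin_equiv_def)
  have "(\<Sum>C\<in>V'. E' C - (D' C - F' C)) = 0" using lap'_deg[OF g'] eq by (metis (no_types))
  then have "deg X' r' E' - deg X' r' D' + deg X' r' F' = 0"
    by (simp add: deg_def sum_subtractf sum.distrib algebra_simps)
  moreover have "0 \<le> deg X' r' E'" using Ep by (simp add: deg_def sum_nonneg)
  ultimately show ?thesis using degF by simp
qed

lemma main: "rank N X' r' i' l' (push_div X r i l f D) \<ge> rank M X r i l D"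
proof -
  let ?P = "\<lambda>k. \<forall>F\<in>divisors X r. (\<forall>v. 0 \<le> F v) \<and> deg X r F = k \<longrightarrow>
       lin_system M X r i l (\<lambda>v. D v - F v) \<noteq> {}"
  let ?P' = "\<lambda>k. \<forall>F\<in>divisors X' r'. (\<forall>v. 0 \<le> F v) \<and> deg X' r' F = k \<longrightarrow>
       lin_system N X' r' i' l' (\<lambda>v. push_div X r i l f D v - F v) \<noteq> {}"
  define B where "B = max (-1) (deg X' r' (push_div X r i l f D))"
  have P1: "?P (-1)"
  proof (intro ballI impI)
    fix F assume F: "F \<in> divisors X r" "(\<forall>v. 0 \<le> F v) \<and> deg X r F = -1"
    have "0 \<le> deg X r F" using F(2) unfolding deg_def by (intro sum_nonneg) auto
    then show "lin_system M X r i l (\<lambda>v. D v - F v) \<noteq> {}" using F(2) by simp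
  qed
  have PB: "?P k \<Longrightarrow> k \<le> B" for k using PP'_bound[OF PP_PP'] by (simp add: B_def)
  have P'1: "?P' (-1)" using PP_PP'[OF P1] .
  have PB': "?P' k \<Longrightarrow> k \<le> B" for k using PP'_bound by (simp add: B_def)
  have g1: "?P (Greatest ?P)" using int_greatest[of ?P, OF P1 PB] by blast
  have "Greatest ?P \<le> Greatest ?P'"
    using int_greatest[of ?P', OF P'1 PB'] PP_PP'[OF g1] by blast
  then show ?thesis unfolding rank_def .
qed

end

theorem lemma4p4:
  fixes M :: "'m::ab_group_add set" and N :: "'n::ab_group_add set"
    and X :: "'x set" and r i :: "'x \<Rightarrow> 'x" and l :: "'x \<Rightarrow> 'm"
    and f :: "'m \<Rightarrow> 'n" and D :: "'x \<Rightarrow> int"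
  assumes "sharp_monoid M" and "sharp_monoid N"
    and "metrised_graph M X r i l"
    and "monoid_hom M N f"
    and "D \<in> divisors X r"
  shows "rank N (contr_X X r i l f) (contr_r X r i l f) (contr_i X r i l f) (contr_l l f)
           (push_div X r i l f D) \<ge> rank M X r i l D"
proof -
  interpret ctx M N X r i l f using assms by unfold_locales
  show ?thesis by (rule main)
qed

end
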